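(* Let $M$ be a closed $3$-manifold obtained by surgery on a framed oriented ordered link $L=L_1\cup\dots\cup L_m$ in an oriented integral homology $3$-sphere $N$, let $G=H_1(M)/\mathrm{Tors}\,H_1(M)$, let $[[t_i]]\in G$ be represented by the meridian of $L_i$, and let $I_0=\{i\mid[[t_i]]=1\}$. Assume that $I_0$ consists of all $i\in\{1,\dots,m\}$ except a certain $n$. Then the framing number of $L_n$ is $0$ and $lk(L_n,L_i)=0$ for all $i\ne n$. Moreover, for sets $I\subset J\subset I_0$, the group $H(L^{\overline I},L^{\overline I\cap J})$ has rank $1$ if and only if $I=J=I_0$.
   Context: $lk$ is the linking number in $N$; $lk(L_i,L_i)$ denotes the framing number. $\overline I=\{1,\dots,m\}\setminus I$, $L^K=\bigcup_{i\in K}L_i$. For a link $L'$ with components indexed by a set $K$ and a subset $K'\subsetneq K$, $H(L',L'^{K'})$ is the abelian group generated by $t_i$, $i\in K$, subject to the relations $\prod_{j\in K,j\ne i}(t_jt_i^{-1})^{lk(L_i,L_j)}=1$ for $i\in K'$. *)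

theory Defs
  imports Main
begin

definition zspan :: "nat set \<Rightarrow> (nat \<Rightarrow> nat \<Rightarrow> int) \<Rightarrow> (nat \<Rightarrow> int) set" where
  "zspan S r = {v. \<exists>c::nat \<Rightarrow> int. v = (\<lambda>j. \<Sum>i\<in>S. c i * r i j)}"

definition unit_vec :: "nat \<Rightarrow> nat \<Rightarrow> int" where
  "unit_vec i = (\<lambda>j. if j = i then 1 else 0)"

text \<open>x represents a torsion element of Z^n / R (i.e. it is trivial in the quotient mod torsion).\<close>
definition torsion_mod :: "(nat \<Rightarrow> int) set \<Rightarrow> (nat \<Rightarrow> int) \<Rightarrow> bool" where
  "torsion_mod R x \<longleftrightarrow> (\<exists>k::int. k \<noteq> 0 \<and> (\<lambda>j. k * x j) \<in> R)"

text \<open>Surgery relation for the meridian of L_i: sum_j lk(L_i,L_j) t_j = 0 (lk i i = framing).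
  H_1(M) = Z^{1..m} / zspan of these relations.\<close>
definition surgery_rel :: "(nat \<Rightarrow> nat \<Rightarrow> int) \<Rightarrow> nat \<Rightarrow> nat \<Rightarrow> nat \<Rightarrow> int" where
  "surgery_rel lk m i = (\<lambda>j. if j \<in> {1..m} then lk i j else 0)"

definition I0 :: "(nat \<Rightarrow> nat \<Rightarrow> int) \<Rightarrow> nat \<Rightarrow> nat set" where
  "I0 lk m = {i \<in> {1..m}. torsion_mod (zspan {1..m} (surgery_rel lk m)) (unit_vec i)}"

text \<open>Relation of H(L', L'^{K'}) for i in K': prod_{j in K, j ~= i} (t_j t_i^{-1})^{lk(L_i,L_j)} = 1,
  written additively.\<close>
definition H_rel :: "(nat \<Rightarrow> nat \<Rightarrow> int) \<Rightarrow> nat set \<Rightarrow> nat \<Rightarrow> nat \<Rightarrow> int" where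
  "H_rel lk K i = (\<lambda>j. if j \<in> K \<and> j \<noteq> i then lk i j
                       else if j = i then - (\<Sum>l\<in>K - {i}. lk i l) else 0)"

definition group_rank :: "nat set \<Rightarrow> (nat \<Rightarrow> int) set \<Rightarrow> nat" where
  "group_rank K R = (GREATEST r. \<exists>vs :: nat \<Rightarrow> nat \<Rightarrow> int.
      (\<forall>l<r. \<forall>j. j \<notin> K \<longrightarrow> vs l j = 0) \<and>
      (\<forall>c :: nat \<Rightarrow> int. (\<lambda>j. \<Sum>l<r. c l * vs l j) \<in> R \<longrightarrow> (\<forall>l<r. c l = 0)))"

text \<open>rank of H(L', L'^{K'}) where L' has components indexed by K.\<close>
definition H_rank :: "(nat \<Rightarrow> nat \<Rightarrow> int) \<Rightarrow> nat set \<Rightarrow> nat set \<Rightarrow> nat" where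
  "H_rank lk K K' = group_rank K (zspan K' (H_rel lk K))"

end

theory Submission imports Defs begin

lemma dep:
  assumes "finite K"
  shows "finite S \<Longrightarrow> card S > card K \<Longrightarrow> (\<forall>l\<in>S. \<forall>j. j \<notin> K \<longrightarrow> vs l j = 0) \<Longrightarrow>
    \<exists>c. (\<exists>l\<in>S. c l \<noteq> 0) \<and> (\<forall>j. (\<Sum>l\<in>S. c l * vs l j) = (0::int))"
  using assms
proof (induction K arbitrary: S vs rule: finite_induct)
  case empty
  then obtain l0 where "l0 \<in> S" by (metis card.empty ex_in_conv less_irrefl)
  then show ?case using empty by (intro exI[of _ "\<lambda>_. 1"]) auto
next
  case (insert a K)
  show ?case
  proof (cases "\<forall>l\<in>S. vs l a = 0")
    case True
    have "\<forall>l\<in>S. \<forall>j. j \<notin> K \<longrightarrow> vs l j = 0"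
      using True insert.prems(3) by (metis insert_iff)
    moreover have "card S > card K" using insert by simp
    ultimately show ?thesis using insert.IH insert.prems(1) by blast
  next
    case False
    then obtain p where p: "p \<in> S" "vs p a \<noteq> 0" by blast
    define S' where "S' = S - {p}"
    define w where "w l j = vs p a * vs l j - vs l a * vs p j" for l j
    have fS': "finite S'" using insert.prems S'_def by simp
    have cS': "card S' > card K" using insert p S'_def by simp
    have sw: "\<forall>l\<in>S'. \<forall>j. j \<notin> K \<longrightarrow> w l j = 0"
    proof (intro ballI allI impI)
      fix l j assume l: "l \<in> S'" and j: "j \<notin> K"
      show "w l j = 0"
      proof (cases "j = a")
        case True then show ?thesis by (simp add: w_def)
      next
        case False
        then have "j \<notin> insert a K" using j by simp
        then show ?thesis using insert.prems(3) l p(1) S'_def by (simp add: w_def)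
      qed
    qed
    obtain d where d: "\<exists>l\<in>S'. d l \<noteq> 0" "\<forall>j. (\<Sum>l\<in>S'. d l * w l j) = 0"
      using insert.IH[OF fS' cS' sw] by blast
    define c where "c l = (if l = p then - (\<Sum>l\<in>S'. d l * vs l a) else d l * vs p a)" for l
    have "\<exists>l\<in>S. c l \<noteq> 0"
    proof -
      obtain l where "l \<in> S'" "d l \<noteq> 0" using d(1) by blast
      then show ?thesis using p S'_def by (intro bexI[of _ l]) (auto simp: c_def)
    qed
    moreover have "\<forall>j. (\<Sum>l\<in>S. c l * vs l j) = 0"
    proof
      fix j
      have "(\<Sum>l\<in>S. c l * vs l j) = c p * vs p j + (\<Sum>l\<in>S'. c l * vs l j)"
        using p(1) insert.prems(1) S'_def by (simp add: sum.remove)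
      also have "(\<Sum>l\<in>S'. c l * vs l j) = (\<Sum>l\<in>S'. d l * vs p a * vs l j)"
        by (rule sum.cong) (auto simp: c_def S'_def)
      also have "c p * vs p j = - (\<Sum>l\<in>S'. d l * vs l a * vs p j)"
        by (simp add: c_def sum_distrib_right)
      finally have "(\<Sum>l\<in>S. c l * vs l j) = (\<Sum>l\<in>S'. d l * w l j)"
        by (simp add: w_def algebra_simps sum_subtractf sum_distrib_left)
      then show "(\<Sum>l\<in>S. c l * vs l j) = 0" using d(2) by simp
    qed
    ultimately show ?thesis by blast
  qed
qed


lemma zspan_zero: "(\<lambda>j. 0) \<in> zspan S r"
  unfolding zspan_def by (intro CollectI exI[of _ "\<lambda>_. 0"]) simp

lemma zspan_lin:
  assumes "v \<in> zspan S r" "w \<in> zspan S r"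
  shows "(\<lambda>j. a * v j + b * w j) \<in> zspan S r"
proof -
  obtain c d where "v = (\<lambda>j. \<Sum>i\<in>S. c i * r i j)" "w = (\<lambda>j. \<Sum>i\<in>S. d i * r i j)"
    using assms unfolding zspan_def by blast
  then show ?thesis unfolding zspan_def
    by (intro CollectI exI[of _ "\<lambda>i. a * c i + b * d i"])
       (auto simp: sum_distrib_left sum.distrib algebra_simps)
qed

lemma zspan_gen:
  assumes "i \<in> S" "finite S"
  shows "r i \<in> zspan S r"
  unfolding zspan_def
proof (intro CollectI exI[of _ "\<lambda>x. if x = i then 1 else 0"])
  show "r i = (\<lambda>j. \<Sum>x\<in>S. (if x = i then 1 else 0) * r x j)"
  proof
    fix j
    have "(\<Sum>x\<in>S. (if x = i then 1 else 0) * r x j) = (\<Sum>x\<in>S. if x = i then r x j else 0)"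
      by (rule sum.cong) auto
    then show "r i j = (\<Sum>x\<in>S. (if x = i then 1 else 0) * r x j)"
      using assms by (simp add: sum.delta')
  qed
qed

lemma tor_lin:
  assumes "torsion_mod (zspan S r) v" "torsion_mod (zspan S r) w"
  shows "torsion_mod (zspan S r) (\<lambda>j. a * v j + b * w j)"
proof -
  obtain k1 k2 where k: "k1 \<noteq> 0" "(\<lambda>j. k1 * v j) \<in> zspan S r" "k2 \<noteq> 0" "(\<lambda>j. k2 * w j) \<in> zspan S r"
    using assms unfolding torsion_mod_def by blast
  have "(\<lambda>j. (k2 * a) * (k1 * v j) + (k1 * b) * (k2 * w j)) \<in> zspan S r"
    using zspan_lin[OF k(2) k(4)] by blast
  moreover have "(\<lambda>j. (k2 * a) * (k1 * v j) + (k1 * b) * (k2 * w j)) = (\<lambda>j. (k1 * k2) * (a * v j + b * w j))"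
    by (auto simp: algebra_simps)
  ultimately show ?thesis unfolding torsion_mod_def using k by (intro exI[of _ "k1*k2"]) auto
qed

lemma tor_sum:
  assumes "finite A" "\<forall>x\<in>A. torsion_mod (zspan S r) (f x)"
  shows "torsion_mod (zspan S r) (\<lambda>j. \<Sum>x\<in>A. g x * f x j)"
  using assms
proof (induction A rule: finite_induct)
  case empty
  then show ?case unfolding torsion_mod_def using zspan_zero by (intro exI[of _ 1]) auto
next
  case (insert x A)
  have "torsion_mod (zspan S r) (\<lambda>j. g x * f x j + 1 * (\<Sum>x\<in>A. g x * f x j))"
    using insert by (intro tor_lin) auto
  then show ?case using insert by simp
qed

lemma tor_of: "v \<in> R \<Longrightarrow> torsion_mod R v"
  unfolding torsion_mod_def by (intro exI[of _ 1]) auto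

lemma tor_scale: "a \<noteq> 0 \<Longrightarrow> torsion_mod R (\<lambda>j. a * v j) \<Longrightarrow> torsion_mod R v"
  unfolding torsion_mod_def
  by (metis (no_types, lifting) ext mult.assoc no_zero_divisors)

lemma rank_bound:
  assumes "finite K" "(\<lambda>j. 0) \<in> R"
    and "\<forall>l<r. \<forall>j. j \<notin> K \<longrightarrow> vs l j = 0"
    and "\<forall>c :: nat \<Rightarrow> int. (\<lambda>j. \<Sum>l<r. c l * vs l j) \<in> R \<longrightarrow> (\<forall>l<r. c l = 0)"
  shows "r \<le> card K"
proof (rule ccontr)
  assume "\<not> r \<le> card K"
  then obtain c where c: "\<exists>l\<in>{..<r}. c l \<noteq> 0" "\<forall>j. (\<Sum>l\<in>{..<r}. c l * vs l j) = 0"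
    using dep[OF assms(1), of "{..<r}" vs] assms(3) by auto
  then have "(\<lambda>j. \<Sum>l<r. c l * vs l j) = (\<lambda>j. 0)" by auto
  then show False using assms(2,4) c(1) by auto
qed


lemma partA:
  assumes n: "n \<in> {1..m}" and I0: "I0 lk m = {1..m} - {n}" and i: "i \<in> {1..m}"
  shows "lk i n = 0"
proof (rule ccontr)
  assume ne: "lk i n \<noteq> 0"
  let ?R = "zspan {1..m} (surgery_rel lk m)"
  let ?row = "surgery_rel lk m i"
  let ?A = "{1..m} - {n}"
  have trow: "torsion_mod ?R ?row" using zspan_gen[of i "{1..m}"] i by (intro tor_of) auto
  have te: "\<forall>x\<in>?A. torsion_mod ?R (unit_vec x)" using I0 unfolding I0_def by blast
  have "torsion_mod ?R (\<lambda>j. 1 * ?row j + (-1) * (\<Sum>x\<in>?A. ?row x * unit_vec x j))"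
    by (intro tor_lin trow tor_sum te) auto
  moreover have "(\<lambda>j. 1 * ?row j + (-1) * (\<Sum>x\<in>?A. ?row x * unit_vec x j)) = (\<lambda>j. ?row n * unit_vec n j)"
  proof
    fix j
    have "(\<Sum>x\<in>?A. ?row x * unit_vec x j) = (\<Sum>x\<in>?A. if x = j then ?row j else 0)"
      by (rule sum.cong) (auto simp: unit_vec_def)
    also have "\<dots> = (if j \<in> ?A then ?row j else 0)" by (simp add: sum.delta)
    finally show "1 * ?row j + (-1) * (\<Sum>x\<in>?A. ?row x * unit_vec x j) = ?row n * unit_vec n j"
      using n by (auto simp: unit_vec_def surgery_rel_def)
  qed
  ultimately have "torsion_mod ?R (\<lambda>j. ?row n * unit_vec n j)" by simp
  moreover have "?row n \<noteq> 0" using ne n by (simp add: surgery_rel_def)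
  ultimately have "torsion_mod ?R (unit_vec n)" using tor_scale by blast
  then have "n \<in> I0 lk m" using n unfolding I0_def by blast
  then show False using I0 by blast
qed

lemma Hrel_n:
  assumes "n \<in> K" "i \<noteq> n" "lk i n = 0"
  shows "H_rel lk K i n = 0"
  using assms by (simp add: H_rel_def)

lemma Hrel_sum:
  assumes "finite K" "i \<in> K"
  shows "(\<Sum>j\<in>K. H_rel lk K i j) = 0"
proof -
  have "(\<Sum>j\<in>K. H_rel lk K i j) = H_rel lk K i i + (\<Sum>j\<in>K - {i}. H_rel lk K i j)"
    using assms by (simp add: sum.remove)
  also have "(\<Sum>j\<in>K - {i}. H_rel lk K i j) = (\<Sum>j\<in>K - {i}. lk i j)"
    by (rule sum.cong) (auto simp: H_rel_def)
  finally show ?thesis by (simp add: H_rel_def)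
qed

theorem lemma10p3:
  fixes lk :: "nat \<Rightarrow> nat \<Rightarrow> int" and m n :: nat
  assumes sym: "\<And>i j. i \<in> {1..m} \<Longrightarrow> j \<in> {1..m} \<Longrightarrow> lk i j = lk j i"
    and n: "n \<in> {1..m}"
    and I0: "I0 lk m = {1..m} - {n}"
  shows "lk n n = 0 \<and> (\<forall>i\<in>{1..m}. i \<noteq> n \<longrightarrow> lk n i = 0) \<and>
         (\<forall>I J. I \<subseteq> J \<and> J \<subseteq> I0 lk m \<longrightarrow>
            (H_rank lk ({1..m} - I) (({1..m} - I) \<inter> J) = 1 \<longleftrightarrow> I = I0 lk m \<and> J = I0 lk m))"
proof -
  have A: "\<And>i. i \<in> {1..m} \<Longrightarrow> lk i n = 0" using partA[OF n I0] by blast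
  have A2: "\<forall>i\<in>{1..m}. i \<noteq> n \<longrightarrow> lk n i = 0" using A sym n by metis
  have B: "H_rank lk ({1..m} - I) (({1..m} - I) \<inter> J) = 1 \<longleftrightarrow> I = I0 lk m \<and> J = I0 lk m"
    if IJ: "I \<subseteq> J" "J \<subseteq> I0 lk m" for I J
  proof -
    define K where "K = {1..m} - I"
    define R where "R = zspan (K \<inter> J) (H_rel lk K)"
    define P where "P r \<longleftrightarrow> (\<exists>vs :: nat \<Rightarrow> nat \<Rightarrow> int.
      (\<forall>l<r. \<forall>j. j \<notin> K \<longrightarrow> vs l j = 0) \<and>
      (\<forall>c :: nat \<Rightarrow> int. (\<lambda>j. \<Sum>l<r. c l * vs l j) \<in> R \<longrightarrow> (\<forall>l<r. c l = 0)))" for r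
    have HR: "H_rank lk K (K \<inter> J) = Greatest P"
      unfolding H_rank_def group_rank_def P_def R_def by simp
    have fK: "finite K" unfolding K_def by simp
    have nK: "n \<in> K" using n IJ I0 unfolding K_def by auto
    have bound: "\<forall>y. P y \<longrightarrow> y \<le> card K"
      unfolding P_def using rank_bound[OF fK] zspan_zero unfolding R_def by blast
    have Rprop: "v n = 0 \<and> (\<Sum>j\<in>K. v j) = 0" if v: "v \<in> R" for v
    proof -
      obtain c where c: "v = (\<lambda>j. \<Sum>i\<in>K \<inter> J. c i * H_rel lk K i j)"
        using v unfolding R_def zspan_def by blast
      have "v n = 0" unfolding c
      proof (rule sum.neutral, rule ballI)
        fix i assume i: "i \<in> K \<inter> J"
        then have "i \<noteq> n" "i \<in> {1..m}" using IJ I0 unfolding K_def by auto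
        then show "c i * H_rel lk K i n = 0" using Hrel_n[OF nK] A by simp
      qed
      moreover have "(\<Sum>j\<in>K. v j) = 0" unfolding c
        apply (subst sum.swap)
        using Hrel_sum[OF fK] by (simp add: sum_distrib_left[symmetric])
      ultimately show ?thesis by blast
    qed
    show ?thesis
    proof (cases "I = I0 lk m")
      case True
      then have JJ: "J = I0 lk m" using IJ by blast
      have "K = {1..m} - ({1..m} - {n})" by (simp add: K_def True I0)
      then have K1: "K = {n}" using n by auto
      have "K \<inter> J = {}" using K1 JJ I0 by auto
      then have R0: "R = {\<lambda>j. 0}" unfolding R_def zspan_def by auto
      have "P 1" unfolding P_def
      proof (intro exI[of _ "\<lambda>_. unit_vec n"] conjI allI impI)
        fix l j assume "l < (1::nat)" "j \<notin> K"
        then show "unit_vec n j = 0" using nK by (auto simp: unit_vec_def)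
      next
        fix c :: "nat \<Rightarrow> int" and l assume h: "(\<lambda>j. \<Sum>l<1. c l * unit_vec n j) \<in> R" "l < (1::nat)"
        then have "(\<lambda>j. c 0 * unit_vec n j) = (\<lambda>j. 0)" using R0 by simp
        then have "c 0 * unit_vec n n = 0" by meson
        then show "c l = 0" using h(2) by (simp add: unit_vec_def)
      qed
      then have "Greatest P = 1" using bound K1
        by (intro Greatest_equality) auto
      then show ?thesis using HR True JJ K_def by simp
    next
      case False
      then obtain a where a: "a \<in> I0 lk m" "a \<notin> I" using IJ by blast
      then have aK: "a \<in> K" "a \<noteq> n" using I0 unfolding K_def by auto
      have "P 2" unfolding P_def
      proof (intro exI[of _ "\<lambda>l. if l = 0 then unit_vec n else unit_vec a"] conjI allI impI)
        fix l j assume "l < (2::nat)" "j \<notin> K"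
        then show "(if l = 0 then unit_vec n else unit_vec a) j = 0" using nK aK by (auto simp: unit_vec_def)
      next
        fix c :: "nat \<Rightarrow> int" and l
        assume h: "(\<lambda>j. \<Sum>l<2. c l * (if l = 0 then unit_vec n else unit_vec a) j) \<in> R" "l < (2::nat)"
        have e: "(\<lambda>j. \<Sum>l<2. c l * (if l = 0 then unit_vec n else unit_vec a) j)
             = (\<lambda>j. c 0 * unit_vec n j + c 1 * unit_vec a j)"
          by (simp add: numeral_2_eq_2)
        from Rprop[OF h(1)[unfolded e]] have
          r: "c 0 * unit_vec n n + c 1 * unit_vec a n = 0"
             "(\<Sum>j\<in>K. c 0 * unit_vec n j + c 1 * unit_vec a j) = 0" by auto
        have s1: "(\<Sum>j\<in>K. c 0 * unit_vec n j + c 1 * unit_vec a j) = c 0 + c 1"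
        proof -
          have u: "\<And>x. x \<in> K \<Longrightarrow> (\<Sum>j\<in>K. unit_vec x j) = 1"
            using fK by (simp add: unit_vec_def sum.delta)
          show ?thesis using u[OF nK] u[OF aK(1)]
            by (simp add: sum.distrib sum_distrib_left[symmetric])
        qed
        have "c 0 = 0" using r(1) aK by (simp add: unit_vec_def)
        moreover have "c 1 = 0" using r(2) s1 \<open>c 0 = 0\<close> by simp
        ultimately show "c l = 0" using h(2) by (cases l) (auto simp: numeral_2_eq_2 less_Suc_eq)
      qed
      then have "2 \<le> Greatest P" using bound by (intro Greatest_le_nat) auto
      then show ?thesis using HR False K_def by simp
    qed
  qed
  show ?thesis using A[OF n] A2 B by blast
qed

end
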